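(* Let $d\in\mathbb{N}$ and $n\geq 3$, and let $k$ be a nonnegative integer with $k\leq \frac{n}{10^4 d^3}$. Let $G$ and $H$ be graphs on $n$ vertices, each with average degree at most $d$. Suppose $G$ and $H$ share $n-k$ cards, i.e. there are distinct vertices $u_1,\dots,u_{n-k}$ of $G$ and distinct vertices $w_1,\dots,w_{n-k}$ of $H$ such that $G-u_i\cong H-w_i$ for every $i\in[n-k]$. Then $G$ and $H$ have the same degree sequence. (That is, the degree sequence of a graph with average degree at most $d$ can be reconstructed from its deck when at most $\frac{n}{10^4d^3}$ of the cards are missing.) *)

theory Defs
  imports Complex_Main "HOL-Library.Multiset"
begin

definition simple_graph :: "'a set \<Rightarrow> 'a set set \<Rightarrow> bool" where
  "simple_graph V E \<longleftrightarrow> finite V \<and>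
     (\<forall>e\<in>E. \<exists>x y. x \<noteq> y \<and> x \<in> V \<and> y \<in> V \<and> e = {x, y})"

definition deg :: "'a set \<Rightarrow> 'a set set \<Rightarrow> 'a \<Rightarrow> nat" where
  "deg V E v = card {u \<in> V. {u, v} \<in> E}"

definition degree_seq :: "'a set \<Rightarrow> 'a set set \<Rightarrow> nat multiset" where
  "degree_seq V E = image_mset (deg V E) (mset_set V)"

definition del_vert_V :: "'a set \<Rightarrow> 'a \<Rightarrow> 'a set" where
  "del_vert_V V u = V - {u}"

definition del_vert_E :: "'a set set \<Rightarrow> 'a \<Rightarrow> 'a set set" where
  "del_vert_E E u = {e \<in> E. u \<notin> e}"

definition graph_iso :: "'a set \<Rightarrow> 'a set set \<Rightarrow> 'b set \<Rightarrow> 'b set set \<Rightarrow> bool" where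
  "graph_iso V E V' E' \<longleftrightarrow> (\<exists>f. bij_betw f V V' \<and>
     (\<forall>x\<in>V. \<forall>y\<in>V. {x, y} \<in> E \<longleftrightarrow> {f x, f y} \<in> E'))"

end

theory Submission
  imports Defs
begin

definition nb :: "'a set \<Rightarrow> 'a set set \<Rightarrow> 'a \<Rightarrow> 'a set" where
  "nb V E x = {y\<in>V. {y,x}\<in>E}"

lemma deg_nb: "deg V E x = card (nb V E x)"
  by (simp add: deg_def nb_def)

lemma nb_sym: "x \<in> V \<Longrightarrow> y \<in> V \<Longrightarrow> y \<in> nb V E x \<longleftrightarrow> x \<in> nb V E y"
  by (auto simp: nb_def insert_commute)

lemma nb_sub: "nb V E x \<subseteq> V" by (auto simp: nb_def)

lemma sg_finite: "simple_graph V E \<Longrightarrow> finite V" by (simp add: simple_graph_def)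

lemma nb_finite: "simple_graph V E \<Longrightarrow> finite (nb V E x)"
  using nb_sub sg_finite finite_subset by metis

lemma sg_noloop: "simple_graph V E \<Longrightarrow> {x} \<notin> E"
proof
  assume "simple_graph V E" "{x} \<in> E"
  then obtain a b where "a \<noteq> b" "{x} = {a,b}" unfolding simple_graph_def by blast
  then show False by (metis insertCI singletonD)
qed

lemma nb_irrefl: "simple_graph V E \<Longrightarrow> x \<notin> nb V E x"
  using sg_noloop[of V E x] by (auto simp: nb_def)

lemma deg_le: "simple_graph V E \<Longrightarrow> x \<in> V \<Longrightarrow> deg V E x \<le> card V - 1"
proof -
  assume sg: "simple_graph V E" and x: "x \<in> V"
  have "nb V E x \<subseteq> V - {x}" using nb_irrefl[OF sg] nb_sub by fast
  then have "card (nb V E x) \<le> card (V - {x})"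
    using sg_finite[OF sg] by (intro card_mono) auto
  then show ?thesis using x sg_finite[OF sg] by (simp add: deg_nb)
qed

lemma card_filter_sum: "finite A \<Longrightarrow> card {x\<in>A. P x} = (\<Sum>x\<in>A. of_bool (P x) :: nat)"
  by (simp add: sum.If_cases Int_def)

lemma double_count:
  assumes sg: "simple_graph V E"
  shows "(\<Sum>x\<in>V. card {z\<in>nb V E x. P z}) = (\<Sum>z\<in>{z\<in>V. P z}. deg V E z)"
proof -
  have fV: "finite V" using sg_finite[OF sg] .
  have "(\<Sum>x\<in>V. card {z\<in>nb V E x. P z}) = (\<Sum>x\<in>V. \<Sum>z\<in>V. of_bool ({z,x}\<in>E \<and> P z) :: nat)"
  proof (rule sum.cong[OF refl])
    fix x assume "x \<in> V"
    have "{z\<in>nb V E x. P z} = {z\<in>V. {z,x}\<in>E \<and> P z}" by (auto simp: nb_def)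
    then show "card {z\<in>nb V E x. P z} = (\<Sum>z\<in>V. of_bool ({z,x}\<in>E \<and> P z))"
      using card_filter_sum[OF fV] by simp
  qed
  also have "\<dots> = (\<Sum>z\<in>V. \<Sum>x\<in>V. of_bool ({z,x}\<in>E \<and> P z))" by (rule sum.swap)
  also have "\<dots> = (\<Sum>z\<in>V. if P z then deg V E z else 0)"
  proof (rule sum.cong[OF refl])
    fix z assume "z \<in> V"
    have "(\<Sum>x\<in>V. of_bool ({z,x}\<in>E \<and> P z) :: nat) = card {x\<in>V. {z,x}\<in>E \<and> P z}"
      using card_filter_sum[OF fV] by simp
    also have "\<dots> = (if P z then deg V E z else 0)"
      by (auto simp: deg_def insert_commute)
    finally show "(\<Sum>x\<in>V. of_bool ({z,x}\<in>E \<and> P z) :: nat) = (if P z then deg V E z else 0)" .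
  qed
  also have "\<dots> = (\<Sum>z\<in>{z\<in>V. P z}. deg V E z)"
    using fV by (simp add: sum.If_cases Int_def)
  finally show ?thesis .
qed


lemma card_nb_minus:
  assumes sg: "simple_graph V E"
  shows "card (nb V E x - {u}) + of_bool (u \<in> nb V E x) = deg V E x"
proof (cases "u \<in> nb V E x")
  case True
  have "card (nb V E x - {u}) = card (nb V E x) - 1"
    using True nb_finite[OF sg, of x] by (simp add: card_Diff_singleton)
  moreover have "card (nb V E x) \<ge> 1"
    using True nb_finite[OF sg, of x] by (metis One_nat_def Suc_leI card_gt_0_iff empty_iff)
  ultimately show ?thesis using True by (simp add: deg_nb)
next
  case False
  then show ?thesis by (simp add: deg_nb)
qed

lemma nb_u_eq:
  assumes sg: "simple_graph V E" and uV: "u \<in> V"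
  shows "{x\<in>V-{u}. u \<in> nb V E x \<and> Q x} = {z\<in>nb V E u. Q z}"
proof
  show "{x\<in>V-{u}. u \<in> nb V E x \<and> Q x} \<subseteq> {z\<in>nb V E u. Q z}"
  proof
    fix x assume "x \<in> {x\<in>V-{u}. u \<in> nb V E x \<and> Q x}"
    then have "x \<in> V" "u \<in> nb V E x" "Q x" by auto
    then have "x \<in> nb V E u" using nb_sym[OF uV \<open>x\<in>V\<close>] by blast
    then show "x \<in> {z\<in>nb V E u. Q z}" using \<open>Q x\<close> by blast
  qed
next
  show "{z\<in>nb V E u. Q z} \<subseteq> {x\<in>V-{u}. u \<in> nb V E x \<and> Q x}"
  proof
    fix x assume "x \<in> {z\<in>nb V E u. Q z}"
    then have x: "x \<in> nb V E u" "Q x" by auto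
    then have xV: "x \<in> V" using nb_sub by fast
    have "x \<noteq> u" using x nb_irrefl[OF sg, of u] by blast
    have "u \<in> nb V E x" using nb_sym[OF uV xV] x by blast
    then show "x \<in> {x\<in>V-{u}. u \<in> nb V E x \<and> Q x}" using xV \<open>x\<noteq>u\<close> x by blast
  qed
qed

lemma cnt_card_local:
  assumes sg: "simple_graph V E" and uV: "u \<in> V"
  shows "int (card {x\<in>V. T \<le> deg V E x}) - of_bool (T \<le> deg V E u)
          - int (card {z\<in>nb V E u. deg V E z = T})
       = int (card {x\<in>V-{u}. T \<le> card (nb V E x - {u})})"
proof -
  have fV: "finite V" using sg_finite[OF sg] .
  define A where "A = {x\<in>V. T \<le> deg V E x}"
  define B where "B = {x\<in>V-{u}. T \<le> card (nb V E x - {u})}"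
  define C where "C = {x\<in>V-{u}. u \<in> nb V E x \<and> deg V E x = T}"
  have key: "\<And>x. (T \<le> deg V E x \<longleftrightarrow>
       (T \<le> card (nb V E x - {u}) \<or> (u \<in> nb V E x \<and> deg V E x = T)))
       \<and> \<not> (T \<le> card (nb V E x - {u}) \<and> u \<in> nb V E x \<and> deg V E x = T)"
  proof -
    fix x
    have h: "card (nb V E x - {u}) + of_bool (u \<in> nb V E x) = deg V E x"
      by (rule card_nb_minus[OF sg])
    show "?thesis x"
    proof (cases "u \<in> nb V E x")
      case True then show ?thesis using h by simp linarith
    next
      case False then show ?thesis using h by simp
    qed
  qed
  have Cnb: "C = {z\<in>nb V E u. deg V E z = T}"
    unfolding C_def by (rule nb_u_eq[OF sg uV])
  have AmU: "A - {u} = B \<union> C" using key unfolding A_def B_def C_def by blast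
  have BC: "B \<inter> C = {}" using key unfolding B_def C_def by blast
  have fB: "finite B" "finite C" using fV unfolding B_def C_def by auto
  have c1: "card (A - {u}) = card B + card C" using AmU BC fB card_Un_disjoint by metis
  have fA: "finite A" using fV unfolding A_def by auto
  have c2: "card A = card (A - {u}) + of_bool (T \<le> deg V E u)"
  proof (cases "T \<le> deg V E u")
    case True
    then have "u \<in> A" using uV unfolding A_def by auto
    then have "card (A - {u}) = card A - 1" by (simp add: card_Diff_singleton)
    moreover have "card A \<ge> 1" using \<open>u\<in>A\<close> fA
      by (metis One_nat_def Suc_leI card_gt_0_iff empty_iff)
    ultimately show ?thesis using True by simp
  next
    case False
    then have "u \<notin> A" unfolding A_def by auto
    then show ?thesis using False by simp
  qed
  show ?thesis using c1 c2 Cnb unfolding A_def B_def by simp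
qed


definition iso_pair where
  "iso_pair V E V' E' u w f \<longleftrightarrow> bij_betw f (V - {u}) (V' - {w}) \<and>
     (\<forall>x\<in>V-{u}. \<forall>y\<in>V-{u}. {x,y}\<in>E \<longleftrightarrow> {f x, f y}\<in>E')"

lemma graph_iso_pair:
  assumes "graph_iso (del_vert_V V u) (del_vert_E E u) (del_vert_V V' w) (del_vert_E E' w)"
  shows "\<exists>f. iso_pair V E V' E' u w f"
proof -
  obtain f where b: "bij_betw f (V - {u}) (V' - {w})"
    and e: "\<forall>x\<in>V-{u}. \<forall>y\<in>V-{u}. {x,y} \<in> del_vert_E E u \<longleftrightarrow> {f x, f y} \<in> del_vert_E E' w"
    using assms unfolding graph_iso_def del_vert_V_def by blast
  have "\<forall>x\<in>V-{u}. \<forall>y\<in>V-{u}. {x,y}\<in>E \<longleftrightarrow> {f x, f y}\<in>E'"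
  proof (intro ballI)
    fix x y assume x: "x \<in> V-{u}" and y: "y \<in> V-{u}"
    then have "f x \<in> V'-{w}" "f y \<in> V'-{w}" using b bij_betwE by blast+
    then show "{x,y}\<in>E \<longleftrightarrow> {f x, f y}\<in>E'" using e x y by (auto simp: del_vert_E_def)
  qed
  then show ?thesis using b unfolding iso_pair_def by blast
qed

locale card_pair =
  fixes V :: "'a set" and E and V' :: "'b set" and E' and u w and f :: "'a \<Rightarrow> 'b"
  assumes sg: "simple_graph V E" and sg': "simple_graph V' E'"
    and uV: "u \<in> V" and wV: "w \<in> V'"
    and ip: "iso_pair V E V' E' u w f"
begin

lemma bij: "bij_betw f (V - {u}) (V' - {w})" using ip by (simp add: iso_pair_def)
lemma adj: "x \<in> V-{u} \<Longrightarrow> y \<in> V-{u} \<Longrightarrow> {x,y}\<in>E \<longleftrightarrow> {f x, f y}\<in>E'"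
  using ip by (simp add: iso_pair_def)

lemma fin: "finite V" "finite V'" using sg sg' sg_finite by auto

lemma fmem: "x \<in> V - {u} \<Longrightarrow> f x \<in> V' - {w}" using bij bij_betwE by blast

lemma img_nb:
  assumes x: "x \<in> V - {u}"
  shows "f ` {z\<in>nb V E x - {u}. P (f z)} = {y\<in>nb V' E' (f x) - {w}. P y}"
proof
  show "f ` {z\<in>nb V E x - {u}. P (f z)} \<subseteq> {y\<in>nb V' E' (f x) - {w}. P y}"
  proof
    fix y assume "y \<in> f ` {z\<in>nb V E x - {u}. P (f z)}"
    then obtain z where z: "z \<in> nb V E x" "z \<noteq> u" "P (f z)" "y = f z" by auto
    then have zV: "z \<in> V - {u}" using nb_sub by fast
    have "{z,x}\<in>E" using z by (simp add: nb_def)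
    then have "{f z, f x} \<in> E'" using adj zV x by blast
    then show "y \<in> {y\<in>nb V' E' (f x) - {w}. P y}" using fmem[OF zV] z by (auto simp: nb_def)
  qed
next
  show "{y\<in>nb V' E' (f x) - {w}. P y} \<subseteq> f ` {z\<in>nb V E x - {u}. P (f z)}"
  proof
    fix y assume y: "y \<in> {y\<in>nb V' E' (f x) - {w}. P y}"
    then have "y \<in> V' - {w}" using nb_sub by fast
    then obtain z where zV: "z \<in> V - {u}" and yz: "y = f z"
      using bij by (metis bij_betw_imp_surj_on imageE)
    have "{f z, f x} \<in> E'" using y yz by (simp add: nb_def)
    then have "{z,x}\<in>E" using adj zV x by blast
    then show "y \<in> f ` {z\<in>nb V E x - {u}. P (f z)}" using zV y yz by (auto simp: nb_def)
  qed
qed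

lemma card_nb_pred:
  assumes x: "x \<in> V - {u}"
  shows "card {z\<in>nb V E x - {u}. P (f z)} = card {y\<in>nb V' E' (f x) - {w}. P y}"
proof -
  have sub: "{z\<in>nb V E x - {u}. P (f z)} \<subseteq> V - {u}" using nb_sub[of V E x] by blast
  have inj: "inj_on f (V - {u})" using bij by (simp add: bij_betw_def)
  have "inj_on f {z\<in>nb V E x - {u}. P (f z)}" by (rule inj_on_subset[OF inj sub])
  then have "card (f ` {z\<in>nb V E x - {u}. P (f z)}) = card {z\<in>nb V E x - {u}. P (f z)}"
    by (rule card_image)
  then show ?thesis by (simp only: img_nb[OF x])
qed

lemma card_nb_eq: "x \<in> V - {u} \<Longrightarrow> card (nb V E x - {u}) = card (nb V' E' (f x) - {w})"
proof -
  assume x: "x \<in> V - {u}"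
  have "{z\<in>nb V E x - {u}. True} = nb V E x - {u}" "{y\<in>nb V' E' (f x) - {w}. True} = nb V' E' (f x) - {w}"
    by auto
  then show ?thesis using card_nb_pred[OF x, of "\<lambda>_. True"] by simp
qed

lemma deg_rel: "x \<in> V - {u} \<Longrightarrow>
   deg V E x + of_bool (w \<in> nb V' E' (f x)) = deg V' E' (f x) + of_bool (u \<in> nb V E x)"
proof -
  assume x: "x \<in> V - {u}"
  show ?thesis using card_nb_eq[OF x] card_nb_minus[OF sg, of x u] card_nb_minus[OF sg', of "f x" w] by linarith
qed

lemma sum_reindex: "(\<Sum>x\<in>V-{u}. g (f x)) = (\<Sum>y\<in>V'-{w}. g y)"
  using sum.reindex_bij_betw[OF bij] by metis

lemma sum_adj_u: "(\<Sum>x\<in>V-{u}. of_bool (u \<in> nb V E x) :: nat) = deg V E u"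
proof -
  have "(\<Sum>x\<in>V-{u}. of_bool (u \<in> nb V E x) :: nat) = card {x\<in>V-{u}. u \<in> nb V E x}"
    using fin by (metis (no_types) card_filter_sum finite_Diff)
  also have "{x\<in>V-{u}. u \<in> nb V E x} = nb V E u"
    using nb_u_eq[OF sg uV, of "\<lambda>_. True"] by simp
  finally show ?thesis by (simp add: deg_nb)
qed

lemma sum_adj_u': "(\<Sum>y\<in>V'-{w}. of_bool (w \<in> nb V' E' y) :: nat) = deg V' E' w"
proof -
  have "(\<Sum>y\<in>V'-{w}. of_bool (w \<in> nb V' E' y) :: nat) = card {y\<in>V'-{w}. w \<in> nb V' E' y}"
    using fin by (metis (no_types) card_filter_sum finite_Diff)
  also have "{y\<in>V'-{w}. w \<in> nb V' E' y} = nb V' E' w"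
    using nb_u_eq[OF sg' wV, of "\<lambda>_. True"] by simp
  finally show ?thesis by (simp add: deg_nb)
qed

lemma sum_adj_w: "(\<Sum>x\<in>V-{u}. of_bool (w \<in> nb V' E' (f x)) :: nat) = deg V' E' w"
  using sum_reindex[of "\<lambda>y. of_bool (w \<in> nb V' E' y) :: nat"] sum_adj_u' by simp

lemma img_pred: "f ` {x\<in>V-{u}. P (f x)} = {y\<in>V'-{w}. P y}"
proof -
  have "f ` {x\<in>V-{u}. P (f x)} = {y\<in>f ` (V-{u}). P y}" by (auto simp: image_iff)
  then show ?thesis using bij by (simp add: bij_betw_def)
qed

lemma DS_rel: "int (\<Sum>x\<in>V. deg V E x) - 2 * int (deg V E u)
             = int (\<Sum>y\<in>V'. deg V' E' y) - 2 * int (deg V' E' w)"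
proof -
  have s1: "(\<Sum>x\<in>V. deg V E x) = deg V E u + (\<Sum>x\<in>V-{u}. deg V E x)"
    using fin uV by (simp add: sum.remove)
  have s2: "(\<Sum>y\<in>V'. deg V' E' y) = deg V' E' w + (\<Sum>y\<in>V'-{w}. deg V' E' y)"
    using fin wV by (simp add: sum.remove)
  have e: "(\<Sum>x\<in>V-{u}. deg V E x + of_bool (w \<in> nb V' E' (f x)))
      = (\<Sum>x\<in>V-{u}. deg V' E' (f x) + of_bool (u \<in> nb V E x))"
    using deg_rel by (intro sum.cong) auto
  have e1: "(\<Sum>x\<in>V-{u}. deg V E x + of_bool (w \<in> nb V' E' (f x)))
      = (\<Sum>x\<in>V-{u}. deg V E x) + deg V' E' w"
    by (simp only: sum.distrib sum_adj_w)
  have e2: "(\<Sum>x\<in>V-{u}. deg V' E' (f x) + of_bool (u \<in> nb V E x))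
      = (\<Sum>y\<in>V'-{w}. deg V' E' y) + deg V E u"
    by (simp only: sum.distrib sum_adj_u sum_reindex[of "deg V' E'"])
  show ?thesis using s1 s2 e e1 e2 by linarith
qed

lemma cnt_rel: "int (card {x\<in>V. T \<le> deg V E x}) - of_bool (T \<le> deg V E u)
          - int (card {z\<in>nb V E u. deg V E z = T})
     = int (card {y\<in>V'. T \<le> deg V' E' y}) - of_bool (T \<le> deg V' E' w)
          - int (card {z\<in>nb V' E' w. deg V' E' z = T})"
proof -
  define S where "S = {x\<in>V-{u}. T \<le> card (nb V E x - {u})}"
  have S2: "S = {x\<in>V-{u}. T \<le> card (nb V' E' (f x) - {w})}"
    unfolding S_def using card_nb_eq by (intro Collect_cong) auto
  have im: "f ` S = {y\<in>V'-{w}. T \<le> card (nb V' E' y - {w})}"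
    unfolding S2 by (rule img_pred)
  have sub: "S \<subseteq> V - {u}" unfolding S_def by blast
  have inj: "inj_on f (V - {u})" using bij by (simp add: bij_betw_def)
  have "card (f ` S) = card S" by (rule card_image[OF inj_on_subset[OF inj sub]])
  then have "card S = card {y\<in>V'-{w}. T \<le> card (nb V' E' y - {w})}" using im by simp
  then show ?thesis using cnt_card_local[OF sg uV, of T] cnt_card_local[OF sg' wV, of T]
    unfolding S_def by linarith
qed

end


lemma card_pred_diff:
  assumes "finite A"
  shows "\<bar>int (card {z\<in>A. p z}) - int (card {z\<in>A. q z})\<bar> \<le> int (card {z\<in>A. p z \<noteq> q z})"
proof -
  have a: "card {z\<in>A. p z} \<le> card {z\<in>A. q z} + card {z\<in>A. p z \<noteq> q z}"
  proof -
    have "{z\<in>A. p z} \<subseteq> {z\<in>A. q z} \<union> {z\<in>A. p z \<noteq> q z}" by blast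
    then have "card {z\<in>A. p z} \<le> card ({z\<in>A. q z} \<union> {z\<in>A. p z \<noteq> q z})"
      using assms by (intro card_mono) auto
    also have "\<dots> \<le> card {z\<in>A. q z} + card {z\<in>A. p z \<noteq> q z}" by (rule card_Un_le)
    finally show ?thesis .
  qed
  have b: "card {z\<in>A. q z} \<le> card {z\<in>A. p z} + card {z\<in>A. p z \<noteq> q z}"
  proof -
    have "{z\<in>A. q z} \<subseteq> {z\<in>A. p z} \<union> {z\<in>A. p z \<noteq> q z}" by blast
    then have "card {z\<in>A. q z} \<le> card ({z\<in>A. p z} \<union> {z\<in>A. p z \<noteq> q z})"
      using assms by (intro card_mono) auto
    also have "\<dots> \<le> card {z\<in>A. p z} + card {z\<in>A. p z \<noteq> q z}" by (rule card_Un_le)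
    finally show ?thesis .
  qed
  show ?thesis using a b by linarith
qed

context card_pair begin

definition chi :: "'a \<Rightarrow> nat" where "chi x = of_bool (u \<in> nb V E x) + of_bool (w \<in> nb V' E' (f x))"

lemma sum_chi: "(\<Sum>x\<in>V-{u}. chi x) = deg V E u + deg V' E' w"
  unfolding chi_def by (simp only: sum.distrib sum_adj_u sum_adj_w)

lemma deg_diff: "x \<in> V - {u} \<Longrightarrow> \<bar>int (deg V E x) - int (deg V' E' (f x))\<bar> \<le> int (chi x)"
  using deg_rel[of x] unfolding chi_def by (cases "u \<in> nb V E x"; cases "w \<in> nb V' E' (f x)") auto

lemma deg_ne_chi: "x \<in> V - {u} \<Longrightarrow> deg V E x \<noteq> deg V' E' (f x) \<Longrightarrow> 1 \<le> chi x"
  using deg_rel[of x] unfolding chi_def by (cases "u \<in> nb V E x"; cases "w \<in> nb V' E' (f x)") auto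

lemma Omega_transfer:
  assumes a: "deg V E u \<le> Q" and b: "deg V' E' w \<le> Q"
  shows "\<bar>int (\<Sum>x\<in>V. deg V E x - Q) - int (\<Sum>y\<in>V'. deg V' E' y - Q)\<bar>
          \<le> int (deg V E u + deg V' E' w)"
proof -
  have s1: "(\<Sum>x\<in>V. deg V E x - Q) = (\<Sum>x\<in>V-{u}. deg V E x - Q)"
    using fin uV a by (simp add: sum.remove)
  have s2: "(\<Sum>y\<in>V'. deg V' E' y - Q) = (\<Sum>x\<in>V-{u}. deg V' E' (f x) - Q)"
    using fin wV b sum_reindex[of "\<lambda>y. deg V' E' y - Q"] by (simp add: sum.remove)
  have "\<bar>int (\<Sum>x\<in>V-{u}. deg V E x - Q) - int (\<Sum>x\<in>V-{u}. deg V' E' (f x) - Q)\<bar>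
      = \<bar>\<Sum>x\<in>V-{u}. (int (deg V E x - Q) - int (deg V' E' (f x) - Q))\<bar>"
    by (simp add: sum_subtractf)
  also have "\<dots> \<le> (\<Sum>x\<in>V-{u}. \<bar>int (deg V E x - Q) - int (deg V' E' (f x) - Q)\<bar>)"
    by (rule sum_abs)
  also have "\<dots> \<le> (\<Sum>x\<in>V-{u}. int (chi x))"
  proof (rule sum_mono)
    fix x assume x: "x \<in> V - {u}"
    show "\<bar>int (deg V E x - Q) - int (deg V' E' (f x) - Q)\<bar> \<le> int (chi x)"
      using deg_diff[OF x] by linarith
  qed
  also have "\<dots> = int (deg V E u + deg V' E' w)" using sum_chi by (metis of_nat_sum)
  finally show ?thesis using s1 s2 by simp
qed

definition Dt where "Dt T = {z\<in>V-{u}. deg V E z \<noteq> deg V' E' (f z) \<and> (deg V E z = T \<or> deg V' E' (f z) = T)}"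

lemma card_Dt: "card (Dt T) \<le> deg V E u + deg V' E' w"
proof -
  have "Dt T \<subseteq> {z\<in>V-{u}. 1 \<le> chi z}" using deg_ne_chi unfolding Dt_def by blast
  then have "card (Dt T) \<le> card {z\<in>V-{u}. 1 \<le> chi z}" using fin by (intro card_mono) auto
  also have "\<dots> = (\<Sum>z\<in>V-{u}. of_bool (1 \<le> chi z))" using fin by (metis (no_types) card_filter_sum finite_Diff)
  also have "\<dots> \<le> (\<Sum>z\<in>V-{u}. chi z)" by (intro sum_mono) auto
  finally show ?thesis using sum_chi by simp
qed

lemma deg_diff1: "x \<in> V - {u} \<Longrightarrow> \<bar>int (deg V E x) - int (deg V' E' (f x))\<bar> \<le> 1"
  using deg_rel[of x] by (cases "u \<in> nb V E x"; cases "w \<in> nb V' E' (f x)") auto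

lemma deg_Dt: "z \<in> Dt T \<Longrightarrow> deg V E z \<le> T + 1"
  using deg_diff1[of z] unfolding Dt_def by auto

end

lemma card_split_pt:
  assumes "finite B"
  shows "card {z\<in>B. p z} = card {z\<in>B - {u}. p z} + of_bool (u \<in> B \<and> p u)"
proof (cases "u \<in> B \<and> p u")
  case True
  then have "{z\<in>B. p z} = insert u {z\<in>B - {u}. p z}" by blast
  then show ?thesis using assms True by simp
next
  case False
  then have "{z\<in>B. p z} = {z\<in>B - {u}. p z}" by blast
  then show ?thesis using False by simp
qed

context card_pair begin

definition Pg where "Pg T x = card {z\<in>nb V E x. deg V E z = T}"
definition Ph where "Ph T y = card {z\<in>nb V' E' y. deg V' E' z = T}"

lemma Pg_le: "Pg T x \<le> deg V E x"
  unfolding Pg_def deg_nb using nb_finite[OF sg] by (intro card_mono) auto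
lemma Ph_le: "Ph T y \<le> deg V' E' y"
  unfolding Ph_def deg_nb using nb_finite[OF sg'] by (intro card_mono) auto

lemma P_diff:
  assumes x: "x \<in> V - {u}"
  shows "\<bar>int (Pg T x) - int (Ph T (f x))\<bar> \<le> int (chi x) + int (card {z\<in>nb V E x - {u}. z \<in> Dt T})"
proof -
  have fA: "finite (nb V E x - {u})" using nb_finite[OF sg] by blast
  have e1: "Pg T x = card {z\<in>nb V E x - {u}. deg V E z = T} + of_bool (u \<in> nb V E x \<and> deg V E u = T)"
    unfolding Pg_def by (rule card_split_pt[OF nb_finite[OF sg]])
  have e2: "Ph T (f x) = card {y\<in>nb V' E' (f x) - {w}. deg V' E' y = T} + of_bool (w \<in> nb V' E' (f x) \<and> deg V' E' w = T)"
    unfolding Ph_def by (rule card_split_pt[OF nb_finite[OF sg']])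
  have e3: "card {y\<in>nb V' E' (f x) - {w}. deg V' E' y = T} = card {z\<in>nb V E x - {u}. deg V' E' (f z) = T}"
    using card_nb_pred[OF x, of "\<lambda>y. deg V' E' y = T"] by simp
  have d: "\<bar>int (card {z\<in>nb V E x - {u}. deg V E z = T}) - int (card {z\<in>nb V E x - {u}. deg V' E' (f z) = T})\<bar>
      \<le> int (card {z\<in>nb V E x - {u}. (deg V E z = T) \<noteq> (deg V' E' (f z) = T)})"
    by (rule card_pred_diff[OF fA])
  have sub: "{z\<in>nb V E x - {u}. (deg V E z = T) \<noteq> (deg V' E' (f z) = T)} \<subseteq> {z\<in>nb V E x - {u}. z \<in> Dt T}"
    using nb_sub[of V E x] unfolding Dt_def by auto
  have "card {z\<in>nb V E x - {u}. (deg V E z = T) \<noteq> (deg V' E' (f z) = T)} \<le> card {z\<in>nb V E x - {u}. z \<in> Dt T}"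
    using fA sub by (intro card_mono) auto
  then show ?thesis using e1 e2 e3 d unfolding chi_def by (simp split: if_splits) linarith?
qed

definition sG where "sG Q T x = (if Q \<le> deg V E x then Pg T x else 0)"
definition sH where "sH Q T y = (if Q \<le> deg V' E' y then Ph T y else 0)"

lemma s_diff:
  assumes x: "x \<in> V - {u}"
  shows "\<bar>int (sG Q T x) - int (sH Q T (f x))\<bar> \<le> int ((Q+1) * chi x) + int (card {z\<in>nb V E x - {u}. z \<in> Dt T})"
proof -
  have pd: "\<bar>int (Pg T x) - int (Ph T (f x))\<bar> \<le> int (chi x) + int (card {z\<in>nb V E x - {u}. z \<in> Dt T})"
    by (rule P_diff[OF x])
  have d1: "\<bar>int (deg V E x) - int (deg V' E' (f x))\<bar> \<le> 1" by (rule deg_diff1[OF x])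
  have ch: "deg V E x \<noteq> deg V' E' (f x) \<Longrightarrow> 1 \<le> chi x" by (rule deg_ne_chi[OF x])
  have l1: "Pg T x \<le> deg V E x" by (rule Pg_le)
  have l2: "Ph T (f x) \<le> deg V' E' (f x)" by (rule Ph_le)
  have cq: "int (chi x) \<le> int ((Q+1) * chi x)" by simp
  consider (b) "Q \<le> deg V E x" "Q \<le> deg V' E' (f x)" | (n) "\<not> Q \<le> deg V E x" "\<not> Q \<le> deg V' E' (f x)"
    | (s1) "Q \<le> deg V E x" "\<not> Q \<le> deg V' E' (f x)" | (s2) "\<not> Q \<le> deg V E x" "Q \<le> deg V' E' (f x)"
    by blast
  then show ?thesis
  proof cases
    case b
    then have "int (sG Q T x) = int (Pg T x)" "int (sH Q T (f x)) = int (Ph T (f x))"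
      unfolding sG_def sH_def by simp_all
    then show ?thesis using pd cq by linarith
  next
    case n then show ?thesis unfolding sG_def sH_def by simp
  next
    case s1
    then have "1 \<le> chi x" using ch by auto
    then have "Q * 1 \<le> (Q+1) * chi x" by (intro mult_le_mono) simp_all
    then have "int Q \<le> int ((Q+1) * chi x)" by linarith
    moreover have "deg V E x \<le> Q" using s1 d1 by linarith
    ultimately show ?thesis using s1 l1 unfolding sG_def sH_def by simp
  next
    case s2
    then have "1 \<le> chi x" using ch by auto
    then have "Q * 1 \<le> (Q+1) * chi x" by (intro mult_le_mono) simp_all
    then have "int Q \<le> int ((Q+1) * chi x)" by linarith
    moreover have "deg V' E' (f x) \<le> Q" using s2 d1 by linarith
    ultimately show ?thesis using s2 l2 unfolding sG_def sH_def by simp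
  qed
qed

lemma S_transfer:
  assumes a: "deg V E u < Q" and b: "deg V' E' w < Q"
  shows "\<bar>int (\<Sum>x\<in>V. sG Q T x) - int (\<Sum>y\<in>V'. sH Q T y)\<bar>
          \<le> int ((deg V E u + deg V' E' w) * (Q + T + 2))"
proof -
  have s1: "(\<Sum>x\<in>V. sG Q T x) = (\<Sum>x\<in>V-{u}. sG Q T x)"
    using fin uV a by (simp add: sum.remove sG_def)
  have s2: "(\<Sum>y\<in>V'. sH Q T y) = (\<Sum>x\<in>V-{u}. sH Q T (f x))"
    using fin wV b sum_reindex[of "sH Q T"] by (simp add: sum.remove sH_def)
  define c where "c x = card {z\<in>nb V E x - {u}. z \<in> Dt T}" for x
  have "\<bar>int (\<Sum>x\<in>V-{u}. sG Q T x) - int (\<Sum>x\<in>V-{u}. sH Q T (f x))\<bar>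
      = \<bar>\<Sum>x\<in>V-{u}. (int (sG Q T x) - int (sH Q T (f x)))\<bar>"
    by (simp add: sum_subtractf)
  also have "\<dots> \<le> (\<Sum>x\<in>V-{u}. \<bar>int (sG Q T x) - int (sH Q T (f x))\<bar>)"
    by (rule sum_abs)
  also have "\<dots> \<le> (\<Sum>x\<in>V-{u}. int ((Q+1) * chi x) + int (c x))"
    unfolding c_def by (rule sum_mono) (rule s_diff)
  also have "\<dots> = int ((Q+1) * (\<Sum>x\<in>V-{u}. chi x)) + int (\<Sum>x\<in>V-{u}. c x)"
    by (simp add: sum.distrib sum_distrib_left)
  finally have m: "\<bar>int (\<Sum>x\<in>V-{u}. sG Q T x) - int (\<Sum>x\<in>V-{u}. sH Q T (f x))\<bar>
      \<le> int ((Q+1) * (deg V E u + deg V' E' w)) + int (\<Sum>x\<in>V-{u}. c x)"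
    using sum_chi by simp
  have "(\<Sum>x\<in>V-{u}. c x) \<le> (\<Sum>x\<in>V-{u}. card {z\<in>nb V E x. z \<in> Dt T})"
    unfolding c_def using nb_finite[OF sg] by (intro sum_mono card_mono) auto
  also have "\<dots> \<le> (\<Sum>x\<in>V. card {z\<in>nb V E x. z \<in> Dt T})"
    using fin by (intro sum_mono2) auto
  also have "\<dots> = (\<Sum>z\<in>{z\<in>V. z \<in> Dt T}. deg V E z)" by (rule double_count[OF sg])
  also have "\<dots> \<le> (\<Sum>z\<in>{z\<in>V. z \<in> Dt T}. T + 1)"
    using deg_Dt by (intro sum_mono) auto
  also have "\<dots> = card {z\<in>V. z \<in> Dt T} * (T + 1)" by simp
  also have "\<dots> \<le> (deg V E u + deg V' E' w) * (T + 1)"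
  proof -
    have "card {z\<in>V. z \<in> Dt T} \<le> card (Dt T)" using fin unfolding Dt_def by (intro card_mono) auto
    then show ?thesis using card_Dt by (meson le_trans mult_le_mono1)
  qed
  finally have cs: "(\<Sum>x\<in>V-{u}. c x) \<le> (deg V E u + deg V' E' w) * (T + 1)" .
  have cs': "int (\<Sum>x\<in>V-{u}. c x) \<le> int ((deg V E u + deg V' E' w) * (T + 1))"
    using cs by (simp only: of_nat_le_iff)
  have eq: "int ((Q+1) * (deg V E u + deg V' E' w)) + int ((deg V E u + deg V' E' w) * (T + 1))
     = int ((deg V E u + deg V' E' w) * (Q + T + 2))"
    by (simp add: algebra_simps)
  have "int ((Q+1) * (deg V E u + deg V' E' w)) + int (\<Sum>x\<in>V-{u}. c x)
     \<le> int ((deg V E u + deg V' E' w) * (Q + T + 2))"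
    using cs' eq by linarith
  then show ?thesis using m s1 s2 by linarith
qed

end

definition cnt where "cnt V E T = card {x\<in>V. T \<le> deg V E x}"

lemma count_degseq:
  assumes "finite V"
  shows "count (degree_seq V E) j = card {x\<in>V. deg V E x = j}"
proof -
  have "count (degree_seq V E) j = (\<Sum>y\<in>deg V E -` {j} \<inter> V. 1)"
    unfolding degree_seq_def using assms by (simp add: count_image_mset)
  also have "deg V E -` {j} \<inter> V = {x\<in>V. deg V E x = j}" by auto
  finally show ?thesis by simp
qed

lemma cnt_split:
  assumes "finite V"
  shows "cnt V E T = card {x\<in>V. deg V E x = T} + cnt V E (Suc T)"
proof -
  have "{x\<in>V. T \<le> deg V E x} = {x\<in>V. deg V E x = T} \<union> {x\<in>V. Suc T \<le> deg V E x}" by auto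
  moreover have "{x\<in>V. deg V E x = T} \<inter> {x\<in>V. Suc T \<le> deg V E x} = {}" by auto
  ultimately show ?thesis unfolding cnt_def using assms
    by (simp add: card_Un_disjoint)
qed

lemma degseq_from_cnt:
  assumes "finite V" "finite V'" "\<And>T. cnt V E T = cnt V' E' T"
  shows "degree_seq V E = degree_seq V' E'"
proof (rule multiset_eqI)
  fix j
  have "card {x\<in>V. deg V E x = j} = card {x\<in>V'. deg V' E' x = j}"
    using cnt_split[OF assms(1), of E j] cnt_split[OF assms(2), of E' j] assms(3)[of j] assms(3)[of "Suc j"]
    by simp
  then show "count (degree_seq V E) j = count (degree_seq V' E') j"
    using count_degseq assms(1,2) by metis
qed

lemma cnt_ge_n:
  assumes sg: "simple_graph V E" and "card V \<le> T"
  shows "cnt V E T = 0"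
proof -
  have "{x\<in>V. T \<le> deg V E x} = {}"
  proof (rule ccontr)
    assume "{x\<in>V. T \<le> deg V E x} \<noteq> {}"
    then obtain x where "x \<in> V" "T \<le> deg V E x" by auto
    moreover have "card V \<ge> 1" using \<open>x\<in>V\<close> sg_finite[OF sg] by (metis One_nat_def Suc_leI card_gt_0_iff empty_iff)
    ultimately show False using deg_le[OF sg] assms(2) by fastforce
  qed
  then show ?thesis unfolding cnt_def by (metis card.empty)
qed

lemma cnt_bound:
  assumes sg: "simple_graph V E"
  shows "T * cnt V E T \<le> (\<Sum>x\<in>V. deg V E x)"
proof -
  have fV: "finite V" using sg_finite[OF sg] .
  have "T * cnt V E T = (\<Sum>x\<in>{x\<in>V. T \<le> deg V E x}. T)" by (simp add: cnt_def)
  also have "\<dots> \<le> (\<Sum>x\<in>{x\<in>V. T \<le> deg V E x}. deg V E x)" by (intro sum_mono) auto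
  also have "\<dots> \<le> (\<Sum>x\<in>V. deg V E x)" using fV by (intro sum_mono2) auto
  finally show ?thesis .
qed

lemma exact_bound:
  assumes sg: "simple_graph V E"
  shows "T * card {x\<in>V. deg V E x = T} \<le> (\<Sum>x\<in>V. deg V E x)"
proof -
  have fV: "finite V" using sg_finite[OF sg] .
  have "T * card {x\<in>V. deg V E x = T} = (\<Sum>x\<in>{x\<in>V. deg V E x = T}. deg V E x)" by simp
  also have "\<dots> \<le> (\<Sum>x\<in>V. deg V E x)" using fV by (intro sum_mono2) auto
  finally show ?thesis .
qed

lemma sum_P_all:
  assumes sg: "simple_graph V E"
  shows "(\<Sum>x\<in>V. card {z\<in>nb V E x. deg V E z = T}) = T * card {x\<in>V. deg V E x = T}"
  using double_count[OF sg, of "\<lambda>z. deg V E z = T"] by simp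


locale setting =
  fixes VG :: "'a set" and EG and VH :: "'b set" and EH and n k d :: nat
    and u :: "nat \<Rightarrow> 'a" and w :: "nat \<Rightarrow> 'b"
  assumes sgG: "simple_graph VG EG" and sgH: "simple_graph VH EH"
    and cG: "card VG = n" and cH: "card VH = n" and n3: "3 \<le> n"
    and kb: "k * (10000 * d^3) \<le> n" and d1: "1 \<le> d"
    and sumG: "(\<Sum>v\<in>VG. deg VG EG v) \<le> d * n" and sumH: "(\<Sum>v\<in>VH. deg VH EH v) \<le> d * n"
    and injU: "inj_on u {..<n-k}" and uin: "u ` {..<n-k} \<subseteq> VG"
    and injW: "inj_on w {..<n-k}" and win: "w ` {..<n-k} \<subseteq> VH"
    and iso: "\<forall>i<n - k. graph_iso (del_vert_V VG (u i)) (del_vert_E EG (u i))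
                            (del_vert_V VH (w i)) (del_vert_E EH (w i))"
begin

abbreviation "I \<equiv> {..<n-k}"
abbreviation "MG \<equiv> VG - u ` I"
abbreviation "MH \<equiv> VH - w ` I"
abbreviation "a j \<equiv> deg VG EG (u j)"
abbreviation "b j \<equiv> deg VH EH (w j)"
abbreviation "DSG \<equiv> (\<Sum>v\<in>VG. deg VG EG v)"
abbreviation "DSH \<equiv> (\<Sum>v\<in>VH. deg VH EH v)"

lemma fG: "finite VG" using sgG sg_finite by blast
lemma fH: "finite VH" using sgH sg_finite by blast

lemma d3: "d \<le> d^3" "1 \<le> d^3" "d^2 \<le> d^3"
proof -
  show "d \<le> d^3" using d1 by (simp add: power3_eq_cube)
  show "1 \<le> d^3" using d1 by simp
  show "d^2 \<le> d^3" using d1 by (simp add: power2_eq_square power3_eq_cube)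
qed

lemma kle: "k \<le> n"
proof -
  have "k * 1 \<le> k * (10000 * d^3)" using d3 by (intro mult_le_mono2) simp
  then have "k \<le> k * (10000 * d^3)" by simp
  then show ?thesis using kb by (rule le_trans)
qed

lemma kbig: "1 \<le> k \<Longrightarrow> 10000 * (k * d^3) \<le> n"
  using kb by (simp add: algebra_simps)

lemma nk_pos: "0 < n - k"
proof (cases "k = 0")
  case True then show ?thesis using n3 by simp
next
  case False
  then have "10000 * (k * d^3) \<le> n" using kbig by simp
  moreover have "k \<le> k * d^3" using d3 by simp
  ultimately show ?thesis using False by linarith
qed

lemma uV: "j < n - k \<Longrightarrow> u j \<in> VG" using uin by auto
lemma wV: "j < n - k \<Longrightarrow> w j \<in> VH" using win by auto

lemma pair: "j < n - k \<Longrightarrow> \<exists>f. card_pair VG EG VH EH (u j) (w j) f"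
proof -
  assume j: "j < n - k"
  have g: "graph_iso (del_vert_V VG (u j)) (del_vert_E EG (u j)) (del_vert_V VH (w j)) (del_vert_E EH (w j))"
    using iso j by simp
  obtain f where "iso_pair VG EG VH EH (u j) (w j) f" using graph_iso_pair[OF g] by blast
  then have "card_pair VG EG VH EH (u j) (w j) f"
    by (intro card_pair.intro[OF sgG sgH uV[OF j] wV[OF j]])
  then show ?thesis by blast
qed

lemma card_uI: "card (u ` I) = n - k" using injU by (simp add: card_image)
lemma card_wI: "card (w ` I) = n - k" using injW by (simp add: card_image)
lemma card_MG: "card MG = k"
proof -
  have "finite (u ` I)" by simp
  then have "card MG = card VG - card (u ` I)" using uin by (rule card_Diff_subset)
  then show ?thesis using card_uI cG kle by simp
qed
lemma card_MH: "card MH = k"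
proof -
  have "finite (w ` I)" by simp
  then have "card MH = card VH - card (w ` I)" using win by (rule card_Diff_subset)
  then show ?thesis using card_wI cH kle by simp
qed

lemma split_G: "(\<Sum>x\<in>VG. g x) = (\<Sum>j\<in>I. g (u j)) + (\<Sum>x\<in>MG. g x)"
proof -
  have "(\<Sum>x\<in>VG. g x) = (\<Sum>x\<in>MG. g x) + (\<Sum>x\<in>u ` I. g x)"
    using sum.subset_diff[OF uin fG] by simp
  also have "(\<Sum>x\<in>u ` I. g x) = (\<Sum>j\<in>I. g (u j))" using sum.reindex[OF injU] by simp
  finally show ?thesis by (simp add: add.commute)
qed

lemma split_H: "(\<Sum>x\<in>VH. g x) = (\<Sum>j\<in>I. g (w j)) + (\<Sum>x\<in>MH. g x)"
proof -
  have "(\<Sum>x\<in>VH. g x) = (\<Sum>x\<in>MH. g x) + (\<Sum>x\<in>w ` I. g x)"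
    using sum.subset_diff[OF win fH] by simp
  also have "(\<Sum>x\<in>w ` I. g x) = (\<Sum>j\<in>I. g (w j))" using sum.reindex[OF injW] by simp
  finally show ?thesis by (simp add: add.commute)
qed

lemma countI_G: "card {j\<in>I. P (u j)} \<le> card {x\<in>VG. P x}"
proof -
  have "u ` {j\<in>I. P (u j)} \<subseteq> {x\<in>VG. P x}" using uin by auto
  moreover have "inj_on u {j\<in>I. P (u j)}" using injU by (rule inj_on_subset) auto
  ultimately have "card (u ` {j\<in>I. P (u j)}) \<le> card {x\<in>VG. P x}"
    using fG by (intro card_mono) auto
  then show ?thesis using card_image[OF \<open>inj_on u {j\<in>I. P (u j)}\<close>] by simp
qed

lemma countI_H: "card {j\<in>I. P (w j)} \<le> card {x\<in>VH. P x}"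
proof -
  have "w ` {j\<in>I. P (w j)} \<subseteq> {x\<in>VH. P x}" using win by auto
  moreover have "inj_on w {j\<in>I. P (w j)}" using injW by (rule inj_on_subset) auto
  ultimately have "card (w ` {j\<in>I. P (w j)}) \<le> card {x\<in>VH. P x}"
    using fH by (intro card_mono) auto
  then show ?thesis using card_image[OF \<open>inj_on w {j\<in>I. P (w j)}\<close>] by simp
qed

end

context setting begin

lemma DS_pair: "j < n - k \<Longrightarrow> int DSG - 2 * int (a j) = int DSH - 2 * int (b j)"
proof -
  assume j: "j < n - k"
  obtain f where "card_pair VG EG VH EH (u j) (w j) f" using pair[OF j] by blast
  then show ?thesis by (rule card_pair.DS_rel)
qed

definition t where "t = int (a 0) - int (b 0)"

lemma t_const: "j < n - k \<Longrightarrow> int (a j) - int (b j) = t"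
proof -
  assume j: "j < n - k"
  show ?thesis using DS_pair[OF j] DS_pair[OF nk_pos] unfolding t_def by linarith
qed

lemma two_t: "2 * t = int DSG - int DSH"
  using DS_pair[OF nk_pos] unfolding t_def by (simp add: algebra_simps)

definition RG where "RG = (\<Sum>x\<in>MG. deg VG EG x)"
definition RH where "RH = (\<Sum>x\<in>MH. deg VH EH x)"

lemma R_rel: "(int (n - k) - 2) * t = int RH - int RG"
proof -
  have sa: "DSG = (\<Sum>j\<in>I. a j) + RG" unfolding RG_def by (rule split_G)
  have sb: "DSH = (\<Sum>j\<in>I. b j) + RH" unfolding RH_def by (rule split_H)
  have "(\<Sum>j\<in>I. int (a j) - int (b j)) = (\<Sum>j\<in>I. t)" using t_const by (intro sum.cong) auto
  then have "(\<Sum>j\<in>I. int (a j)) - (\<Sum>j\<in>I. int (b j)) = int (n - k) * t"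
    by (simp add: sum_subtractf)
  moreover have "(\<Sum>j\<in>I. int (a j)) = int DSG - int RG" using sa by simp
  moreover have "(\<Sum>j\<in>I. int (b j)) = int DSH - int RH" using sb by simp
  ultimately have "int (n - k) * t = 2 * t - int RG + int RH" using two_t by linarith
  then show ?thesis by (simp add: algebra_simps)
qed

lemma cnt_le_div:
  assumes "c * (Q + 1) \<le> d * n" "m \<le> d" "1 \<le> m"
  shows "True" by simp

lemma high_count_G: "(Q+1) * card {j\<in>I. Q < a j} \<le> d * n"
proof -
  have e: "{x\<in>VG. Q < deg VG EG x} = {x\<in>VG. Suc Q \<le> deg VG EG x}" by auto
  have "card {j\<in>I. Q < a j} \<le> card {x\<in>VG. Suc Q \<le> deg VG EG x}"
    using countI_G[of "\<lambda>x. Q < deg VG EG x"] unfolding e by simp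
  then have "(Q+1) * card {j\<in>I. Q < a j} \<le> (Q+1) * cnt VG EG (Suc Q)" unfolding cnt_def by (rule mult_le_mono2)
  also have "\<dots> \<le> DSG" using cnt_bound[OF sgG, of "Suc Q"] by simp
  finally show ?thesis using sumG by linarith
qed

lemma high_count_H: "(Q+1) * card {j\<in>I. Q < b j} \<le> d * n"
proof -
  have e: "{x\<in>VH. Q < deg VH EH x} = {x\<in>VH. Suc Q \<le> deg VH EH x}" by auto
  have "card {j\<in>I. Q < b j} \<le> card {x\<in>VH. Suc Q \<le> deg VH EH x}"
    using countI_H[of "\<lambda>x. Q < deg VH EH x"] unfolding e by simp
  then have "(Q+1) * card {j\<in>I. Q < b j} \<le> (Q+1) * cnt VH EH (Suc Q)" unfolding cnt_def by (rule mult_le_mono2)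
  also have "\<dots> \<le> DSH" using cnt_bound[OF sgH, of "Suc Q"] by simp
  finally show ?thesis using sumH by linarith
qed

lemma div_d: "(c * d + 1) * m \<le> d * n \<Longrightarrow> c * m \<le> n"
proof -
  assume h: "(c * d + 1) * m \<le> d * n"
  have "d * (c * m) \<le> (c * d + 1) * m" by (simp add: algebra_simps)
  then have "d * (c * m) \<le> d * n" using h by linarith
  then show ?thesis using d1 by simp
qed

lemma low_pair: "1 \<le> k \<Longrightarrow> \<exists>j<n-k. a j \<le> 3*d \<and> b j \<le> 3*d"
proof -
  assume k1: "1 \<le> k"
  define C1 where "C1 = card {j\<in>I. 3*d < a j}"
  define C2 where "C2 = card {j\<in>I. 3*d < b j}"
  have "(3*d+1) * C1 \<le> d * n" unfolding C1_def by (rule high_count_G)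
  then have c1: "3 * C1 \<le> n" by (intro div_d) (simp add: mult.commute)
  have "(3*d+1) * C2 \<le> d * n" unfolding C2_def by (rule high_count_H)
  then have c2: "3 * C2 \<le> n" by (intro div_d) (simp add: mult.commute)
  have "k * 1 \<le> k * d^3" by (rule mult_le_mono2) (rule d3(2))
  then have kk: "10000 * k \<le> n" using kbig[OF k1] by linarith
  have eqs: "{j\<in>I. 3*d < a j \<or> 3*d < b j} = {j\<in>I. 3*d < a j} \<union> {j\<in>I. 3*d < b j}" by auto
  have "card ({j\<in>I. 3*d < a j} \<union> {j\<in>I. 3*d < b j}) \<le> C1 + C2" unfolding C1_def C2_def
    by (rule card_Un_le)
  then have "card {j\<in>I. 3*d < a j \<or> 3*d < b j} \<le> C1 + C2" by (simp only: eqs)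
  also have "\<dots> < n - k" using c1 c2 kk k1 by linarith
  also have "\<dots> = card I" by simp
  finally have lt: "card {j\<in>I. 3*d < a j \<or> 3*d < b j} < card I" .
  have "{j\<in>I. 3*d < a j \<or> 3*d < b j} \<noteq> I"
  proof
    assume "{j\<in>I. 3*d < a j \<or> 3*d < b j} = I"
    then show False using lt by simp
  qed
  then obtain j where "j \<in> I" "\<not> (3*d < a j \<or> 3*d < b j)" by blast
  then show ?thesis by auto
qed

end

context setting begin

lemma MG_sum_bounds:
  "(\<Sum>x\<in>MG. deg VG EG x - Q) \<le> RG" "RG \<le> (\<Sum>x\<in>MG. deg VG EG x - Q) + k * Q"
proof -
  show "(\<Sum>x\<in>MG. deg VG EG x - Q) \<le> RG" unfolding RG_def by (intro sum_mono) auto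
  have "RG \<le> (\<Sum>x\<in>MG. (deg VG EG x - Q) + Q)" unfolding RG_def by (intro sum_mono) auto
  also have "\<dots> = (\<Sum>x\<in>MG. deg VG EG x - Q) + card MG * Q" by (simp add: sum.distrib)
  finally show "RG \<le> (\<Sum>x\<in>MG. deg VG EG x - Q) + k * Q" using card_MG by simp
qed

lemma MH_sum_bounds:
  "(\<Sum>x\<in>MH. deg VH EH x - Q) \<le> RH" "RH \<le> (\<Sum>x\<in>MH. deg VH EH x - Q) + k * Q"
proof -
  show "(\<Sum>x\<in>MH. deg VH EH x - Q) \<le> RH" unfolding RH_def by (intro sum_mono) auto
  have "RH \<le> (\<Sum>x\<in>MH. (deg VH EH x - Q) + Q)" unfolding RH_def by (intro sum_mono) auto
  also have "\<dots> = (\<Sum>x\<in>MH. deg VH EH x - Q) + card MH * Q" by (simp add: sum.distrib)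
  finally show "RH \<le> (\<Sum>x\<in>MH. deg VH EH x - Q) + k * Q" using card_MH by simp
qed

lemma vd_bound:
  "\<bar>(\<Sum>j\<in>I. int (a j - Q) - int (b j - Q))\<bar>
     \<le> \<bar>t\<bar> * int (card {j\<in>I. Q < a j} + card {j\<in>I. Q < b j})"
proof -
  have "\<bar>(\<Sum>j\<in>I. int (a j - Q) - int (b j - Q))\<bar> \<le> (\<Sum>j\<in>I. \<bar>int (a j - Q) - int (b j - Q)\<bar>)"
    by (rule sum_abs)
  also have "\<dots> \<le> (\<Sum>j\<in>I. \<bar>t\<bar> * (of_bool (Q < a j) + of_bool (Q < b j)))"
  proof (rule sum_mono)
    fix j assume "j \<in> I"
    then have tj: "int (a j) - int (b j) = t" using t_const by simp
    show "\<bar>int (a j - Q) - int (b j - Q)\<bar> \<le> \<bar>t\<bar> * (of_bool (Q < a j) + of_bool (Q < b j))"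
    proof (cases "Q < a j \<or> Q < b j")
      case True
      have "\<bar>int (a j - Q) - int (b j - Q)\<bar> \<le> \<bar>t\<bar>" using tj by linarith
      moreover have "\<bar>t\<bar> \<le> \<bar>t\<bar> * (of_bool (Q < a j) + of_bool (Q < b j))"
        using True by (cases "Q < a j"; cases "Q < b j") auto
      ultimately show ?thesis by linarith
    next
      case False then show ?thesis by simp
    qed
  qed
  also have "\<dots> = \<bar>t\<bar> * ((\<Sum>j\<in>I. of_bool (Q < a j)) + (\<Sum>j\<in>I. of_bool (Q < b j)))"
    by (simp only: sum_distrib_left[symmetric] sum.distrib)
  also have "(\<Sum>j\<in>I. of_bool (Q < a j) :: int) = int (card {j\<in>I. Q < a j})"
    by (simp add: Int_def)
  also have "(\<Sum>j\<in>I. of_bool (Q < b j) :: int) = int (card {j\<in>I. Q < b j})"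
    by (simp add: Int_def)
  finally show ?thesis by simp
qed

lemma kd_facts:
  assumes k1: "1 \<le> k"
  shows "k \<le> k*d" "d \<le> k*d" "k*d \<le> k*d^2" "k*d^2 \<le> k*d^3" "10000*(k*d^3) \<le> n" "1 \<le> k*d"
proof -
  show "k \<le> k*d" using d1 by simp
  show "d \<le> k*d" using k1 by simp
  show "k*d \<le> k*d^2" using d1 by (simp add: power2_eq_square)
  show "k*d^2 \<le> k*d^3" using d3(3) by simp
  show "10000*(k*d^3) \<le> n" by (rule kbig[OF k1])
  show "1 \<le> k*d" using k1 d1 by simp
qed

lemma t_zero: "t = 0"
proof (cases "k = 0")
  case True
  have "card MG = 0" using card_MG True by simp
  then have "MG = {}" using fG by simp
  have "card MH = 0" using card_MH True by simp
  then have "MH = {}" using fH by simp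
  have "RG = 0" unfolding RG_def by (simp only: \<open>MG = {}\<close> sum.empty)
  have "RH = 0" unfolding RH_def by (simp only: \<open>MH = {}\<close> sum.empty)
  then have "(int (n - k) - 2) * t = 0" using R_rel \<open>RG = 0\<close> by simp
  moreover have "int (n - k) - 2 \<noteq> 0" using True n3 by simp
  ultimately show ?thesis by simp
next
  case False
  then have k1: "1 \<le> k" by simp
  obtain j0 where j0: "j0 < n-k" "a j0 \<le> 3*d" "b j0 \<le> 3*d" using low_pair[OF k1] by blast
  obtain f where cp: "card_pair VG EG VH EH (u j0) (w j0) f" using pair[OF j0(1)] by blast
  define Q where "Q = 4*d"
  have om: "\<bar>int (\<Sum>x\<in>VG. deg VG EG x - Q) - int (\<Sum>y\<in>VH. deg VH EH y - Q)\<bar> \<le> int (a j0 + b j0)"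
    by (rule card_pair.Omega_transfer[OF cp]) (use j0 d1 in \<open>simp_all add: Q_def\<close>)
  define XA where "XA = (\<Sum>j\<in>I. a j - Q)"
  define XB where "XB = (\<Sum>j\<in>I. b j - Q)"
  define OMG where "OMG = (\<Sum>x\<in>MG. deg VG EG x - Q)"
  define OMH where "OMH = (\<Sum>x\<in>MH. deg VH EH x - Q)"
  have sG: "(\<Sum>x\<in>VG. deg VG EG x - Q) = XA + OMG" unfolding XA_def OMG_def by (rule split_G)
  have sH: "(\<Sum>x\<in>VH. deg VH EH x - Q) = XB + OMH" unfolding XB_def OMH_def by (rule split_H)
  define C where "C = card {j\<in>I. Q < a j} + card {j\<in>I. Q < b j}"
  have vd0: "\<bar>(\<Sum>j\<in>I. int (a j - Q) - int (b j - Q))\<bar> \<le> \<bar>t\<bar> * int C"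
    unfolding C_def by (rule vd_bound)
  have "(\<Sum>j\<in>I. int (a j - Q) - int (b j - Q)) = int XA - int XB"
    unfolding XA_def XB_def by (simp add: sum_subtractf)
  then have vd: "\<bar>int XA - int XB\<bar> \<le> \<bar>t\<bar> * int C" using vd0 by simp
  have "(Q+1) * card {j\<in>I. Q < a j} \<le> d*n" by (rule high_count_G)
  then have c1: "4 * card {j\<in>I. Q < a j} \<le> n" by (intro div_d) (simp add: Q_def mult.commute)
  have "(Q+1) * card {j\<in>I. Q < b j} \<le> d*n" by (rule high_count_H)
  then have c2: "4 * card {j\<in>I. Q < b j} \<le> n" by (intro div_d) (simp add: Q_def mult.commute)
  define c1v where "c1v = card {j\<in>I. Q < a j}"
  define c2v where "c2v = card {j\<in>I. Q < b j}"
  have "C = c1v + c2v" unfolding C_def c1v_def c2v_def by simp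
  then have C2: "2 * C \<le> n" using c1 c2 unfolding c1v_def[symmetric] c2v_def[symmetric] by linarith
  have bG: "OMG \<le> RG" "RG \<le> OMG + k * Q" unfolding OMG_def by (rule MG_sum_bounds)+
  have bH: "OMH \<le> RH" "RH \<le> OMH + k * Q" unfolding OMH_def by (rule MH_sum_bounds)+
  have kQ: "k * Q = 4 * (k * d)" unfolding Q_def by simp
  have key: "\<bar>int RH - int RG\<bar> \<le> 6 * int d + \<bar>t\<bar> * int C + 4 * int (k * d)"
    using om sG sH vd bG bH kQ j0(2,3) by linarith
  have kd: "k \<le> k*d" "d \<le> k*d" "k*d \<le> k*d^2" "k*d^2 \<le> k*d^3" "10000*(k*d^3) \<le> n" "1 \<le> k*d"
    using kd_facts[OF k1] by auto
  show "t = 0"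
  proof (rule ccontr)
    assume "t \<noteq> 0"
    then have t1: "1 \<le> \<bar>t\<bar>" by simp
    have nk: "int (n - k) = int n - int k" using kle by simp
    have pos: "0 \<le> int (n - k) - 2" using nk kd by linarith
    have "\<bar>(int (n - k) - 2) * t\<bar> = (int (n - k) - 2) * \<bar>t\<bar>"
      using pos by (simp add: abs_mult)
    then have h1: "(int (n - k) - 2) * \<bar>t\<bar> \<le> 6 * int d + \<bar>t\<bar> * int C + 4 * int (k * d)"
      using key R_rel by simp
    define Y where "Y = int (n - k) - 2 - int C"
    have Ypos: "0 \<le> Y" unfolding Y_def using nk C2 kd by linarith
    have "\<bar>t\<bar> * Y \<le> 6 * int d + 4 * int (k * d)" using h1 unfolding Y_def by (simp add: algebra_simps)
    moreover have "Y * 1 \<le> Y * \<bar>t\<bar>" by (rule mult_left_mono[OF t1 Ypos])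
    ultimately have "Y \<le> 6 * int d + 4 * int (k * d)" by (simp add: mult.commute)
    then show False unfolding Y_def using nk C2 kd by linarith
  qed
qed

end

context setting begin

lemma ab: "j < n - k \<Longrightarrow> a j = b j"
  using t_const t_zero by fastforce

definition gam where "gam T = int (cnt VG EG T) - int (cnt VH EH T)"
definition PG where "PG T x = card {z\<in>nb VG EG x. deg VG EG z = T}"
definition PH where "PH T y = card {z\<in>nb VH EH y. deg VH EH z = T}"
definition nG where "nG T = card {x\<in>VG. deg VG EG x = T}"
definition nH where "nH T = card {x\<in>VH. deg VH EH x = T}"
definition epsG where "epsG T = (\<Sum>x\<in>MG. PG T x)"
definition epsH where "epsH T = (\<Sum>x\<in>MH. PH T x)"

lemma pair_gam: "j < n - k \<Longrightarrow> gam T = int (PG T (u j)) - int (PH T (w j))"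
proof -
  assume j: "j < n - k"
  obtain f where cp: "card_pair VG EG VH EH (u j) (w j) f" using pair[OF j] by blast
  have "int (card {x\<in>VG. T \<le> deg VG EG x}) - of_bool (T \<le> a j) - int (PG T (u j))
      = int (card {y\<in>VH. T \<le> deg VH EH y}) - of_bool (T \<le> b j) - int (PH T (w j))"
    unfolding PG_def PH_def by (rule card_pair.cnt_rel[OF cp])
  then show ?thesis using ab[OF j] unfolding gam_def cnt_def by simp
qed

lemma nG_cnt: "int (nG T) = int (cnt VG EG T) - int (cnt VG EG (Suc T))"
  using cnt_split[OF fG, of EG T] unfolding nG_def by simp
lemma nH_cnt: "int (nH T) = int (cnt VH EH T) - int (cnt VH EH (Suc T))"
  using cnt_split[OF fH, of EH T] unfolding nH_def by simp

lemma rec: "int (n - k) * gam T = int T * (gam T - gam (Suc T)) - int (epsG T) + int (epsH T)"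
proof -
  have "(\<Sum>j\<in>I. gam T) = (\<Sum>j\<in>I. int (PG T (u j)) - int (PH T (w j)))"
    using pair_gam by (intro sum.cong) auto
  then have e1: "int (n - k) * gam T = (\<Sum>j\<in>I. int (PG T (u j))) - (\<Sum>j\<in>I. int (PH T (w j)))"
    by (simp add: sum_subtractf)
  have "(\<Sum>x\<in>VG. PG T x) = (\<Sum>j\<in>I. PG T (u j)) + epsG T" unfolding epsG_def by (rule split_G)
  moreover have "(\<Sum>x\<in>VG. PG T x) = T * nG T" unfolding PG_def nG_def by (rule sum_P_all[OF sgG])
  ultimately have e2: "(\<Sum>j\<in>I. int (PG T (u j))) = int T * int (nG T) - int (epsG T)"
    by (metis add_diff_cancel_right' of_nat_add of_nat_mult of_nat_sum)
  have "(\<Sum>x\<in>VH. PH T x) = (\<Sum>j\<in>I. PH T (w j)) + epsH T" unfolding epsH_def by (rule split_H)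
  moreover have "(\<Sum>x\<in>VH. PH T x) = T * nH T" unfolding PH_def nH_def by (rule sum_P_all[OF sgH])
  ultimately have e3: "(\<Sum>j\<in>I. int (PH T (w j))) = int T * int (nH T) - int (epsH T)"
    by (metis add_diff_cancel_right' of_nat_add of_nat_mult of_nat_sum)
  have "int (nG T) - int (nH T) = gam T - gam (Suc T)" using nG_cnt nH_cnt unfolding gam_def by simp
  then have "int T * int (nG T) - int T * int (nH T) = int T * (gam T - gam (Suc T))"
    by (simp add: right_diff_distrib[symmetric])
  then show ?thesis using e1 e2 e3 by linarith
qed

lemma PG_le: "PG T x \<le> nG T"
  unfolding PG_def nG_def using fG nb_sub[of VG EG x] by (intro card_mono) auto
lemma PH_le: "PH T x \<le> nH T"
  unfolding PH_def nH_def using fH nb_sub[of VH EH x] by (intro card_mono) auto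

lemma epsG_le: "epsG T \<le> k * nG T"
proof -
  have "epsG T \<le> (\<Sum>x\<in>MG. nG T)" unfolding epsG_def by (intro sum_mono PG_le)
  then show ?thesis using card_MG by simp
qed
lemma epsH_le: "epsH T \<le> k * nH T"
proof -
  have "epsH T \<le> (\<Sum>x\<in>MH. nH T)" unfolding epsH_def by (intro sum_mono PH_le)
  then show ?thesis using card_MH by simp
qed

lemma TnG: "T * nG T \<le> d * n" using exact_bound[OF sgG, of T] sumG unfolding nG_def by linarith
lemma TnH: "T * nH T \<le> d * n" using exact_bound[OF sgH, of T] sumH unfolding nH_def by linarith

lemma caseA:
  assumes g1: "gam (Suc T) = 0"
    and cond: "int (k * d * n) < int T * (int n - int k - int T)"
  shows "gam T = 0"
proof (rule ccontr)
  assume "gam T \<noteq> 0"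
  then have g: "1 \<le> \<bar>gam T\<bar>" by simp
  define Z where "Z = int T * (int n - int k - int T)"
  have Zpos: "0 \<le> Z" using cond of_nat_0_le_iff[of "k*d*n"] unfolding Z_def by linarith
  have "int (n - k) * gam T = int T * gam T - int (epsG T) + int (epsH T)"
    using rec[of T] g1 by (simp add: algebra_simps)
  then have "(int n - int k - int T) * gam T = int (epsH T) - int (epsG T)"
    using kle by (simp add: algebra_simps)
  then have "int T * ((int n - int k - int T) * gam T) = int T * (int (epsH T) - int (epsG T))"
    by simp
  then have "Z * gam T = int T * (int (epsH T) - int (epsG T))"
    unfolding Z_def by (simp only: mult.assoc)
  then have "\<bar>Z * gam T\<bar> = \<bar>int T * (int (epsH T) - int (epsG T))\<bar>" by simp
  then have "Z * \<bar>gam T\<bar> = int T * \<bar>int (epsH T) - int (epsG T)\<bar>"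
    using Zpos by (simp only: abs_mult abs_of_nonneg of_nat_0_le_iff)
  moreover have "int T * \<bar>int (epsH T) - int (epsG T)\<bar> \<le> int (k * d * n)"
  proof -
    have "T * epsG T \<le> T * (k * nG T)" by (intro mult_le_mono2 epsG_le)
    also have "\<dots> = k * (T * nG T)" by simp
    also have "\<dots> \<le> k * (d * n)" by (intro mult_le_mono2 TnG)
    finally have a1: "T * epsG T \<le> k * d * n" by simp
    have "T * epsH T \<le> T * (k * nH T)" by (intro mult_le_mono2 epsH_le)
    also have "\<dots> = k * (T * nH T)" by simp
    also have "\<dots> \<le> k * (d * n)" by (intro mult_le_mono2 TnH)
    finally have a2: "T * epsH T \<le> k * d * n" by simp
    show ?thesis
    proof (cases "epsH T \<le> epsG T")
      case True
      then have "\<bar>int (epsH T) - int (epsG T)\<bar> \<le> int (epsG T)" by simp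
      then have "int T * \<bar>int (epsH T) - int (epsG T)\<bar> \<le> int T * int (epsG T)"
        by (intro mult_left_mono) simp_all
      also have "\<dots> = int (T * epsG T)" by simp
      also have "\<dots> \<le> int (k * d * n)" using a1 by (simp only: of_nat_le_iff)
      finally show ?thesis .
    next
      case False
      then have "\<bar>int (epsH T) - int (epsG T)\<bar> \<le> int (epsH T)" by simp
      then have "int T * \<bar>int (epsH T) - int (epsG T)\<bar> \<le> int T * int (epsH T)"
        by (intro mult_left_mono) simp_all
      also have "\<dots> = int (T * epsH T)" by simp
      also have "\<dots> \<le> int (k * d * n)" using a2 by (simp only: of_nat_le_iff)
      finally show ?thesis .
    qed
  qed
  moreover have "Z * 1 \<le> Z * \<bar>gam T\<bar>" by (rule mult_left_mono[OF g Zpos])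
  ultimately have "Z \<le> int (k * d * n)" by simp
  then show False using cond unfolding Z_def by simp
qed

end

context setting begin

lemma PG_deg: "PG T x \<le> deg VG EG x"
  unfolding PG_def deg_nb using nb_finite[OF sgG] by (intro card_mono) auto
lemma PH_deg: "PH T x \<le> deg VH EH x"
  unfolding PH_def deg_nb using nb_finite[OF sgH] by (intro card_mono) auto

lemma caseB:
  assumes k1: "1 \<le> k" and T10: "T \<le> 10 * (k * d)" and g1: "gam (Suc T) = 0"
  shows "gam T = 0"
proof -
  obtain j0 where j0: "j0 < n-k" "a j0 \<le> 3*d" "b j0 \<le> 3*d" using low_pair[OF k1] by blast
  obtain f where cp: "card_pair VG EG VH EH (u j0) (w j0) f" using pair[OF j0(1)] by blast
  define Q where "Q = 8*d"
  define sg where "sg x = (if Q \<le> deg VG EG x then PG T x else 0)" for x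
  define sh where "sh x = (if Q \<le> deg VH EH x then PH T x else 0)" for x
  have e1: "card_pair.sG VG EG Q T = sg"
    by (rule ext) (simp add: card_pair.sG_def[OF cp] card_pair.Pg_def[OF cp] sg_def PG_def)
  have e2: "card_pair.sH VH EH Q T = sh"
    by (rule ext) (simp add: card_pair.sH_def[OF cp] card_pair.Ph_def[OF cp] sh_def PH_def)
  have ST0: "\<bar>int (\<Sum>x\<in>VG. card_pair.sG VG EG Q T x) - int (\<Sum>y\<in>VH. card_pair.sH VH EH Q T y)\<bar>
          \<le> int ((a j0 + b j0) * (Q + T + 2))"
    by (rule card_pair.S_transfer[OF cp]) (use j0 d1 in \<open>simp_all add: Q_def\<close>)
  define SG where "SG = (\<Sum>x\<in>VG. sg x)"
  define SH where "SH = (\<Sum>x\<in>VH. sh x)"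
  have ST: "\<bar>int SG - int SH\<bar> \<le> int ((a j0 + b j0) * (Q + T + 2))"
    using ST0 unfolding e1 e2 SG_def SH_def .
  define dG where "dG = (\<Sum>x\<in>MG. (if Q \<le> deg VG EG x then 0 else PG T x))"
  define dH where "dH = (\<Sum>x\<in>MH. (if Q \<le> deg VH EH x then 0 else PH T x))"
  have epsG_sp: "epsG T = (\<Sum>x\<in>MG. sg x) + dG"
    unfolding epsG_def dG_def sg_def by (simp only: sum.distrib[symmetric]) (rule sum.cong[OF refl], simp)
  have epsH_sp: "epsH T = (\<Sum>x\<in>MH. sh x) + dH"
    unfolding epsH_def dH_def sh_def by (simp only: sum.distrib[symmetric]) (rule sum.cong[OF refl], simp)
  have dG_le: "dG \<le> k * Q"
  proof -
    have "dG \<le> (\<Sum>x\<in>MG. Q)" unfolding dG_def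
    proof (rule sum_mono)
      fix x
      show "(if Q \<le> deg VG EG x then 0 else PG T x) \<le> Q"
        using PG_deg[of T x] by simp
    qed
    then show ?thesis using card_MG by simp
  qed
  have dH_le: "dH \<le> k * Q"
  proof -
    have "dH \<le> (\<Sum>x\<in>MH. Q)" unfolding dH_def
    proof (rule sum_mono)
      fix x
      show "(if Q \<le> deg VH EH x then 0 else PH T x) \<le> Q"
        using PH_deg[of T x] by simp
    qed
    then show ?thesis using card_MH by simp
  qed
  have SGsp: "SG = (\<Sum>j\<in>I. sg (u j)) + (\<Sum>x\<in>MG. sg x)" unfolding SG_def by (rule split_G)
  have SHsp: "SH = (\<Sum>j\<in>I. sh (w j)) + (\<Sum>x\<in>MH. sh x)" unfolding SH_def by (rule split_H)
  define N where "N = card {j\<in>I. Q \<le> a j}"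
  have visd: "(\<Sum>j\<in>I. int (sg (u j))) - (\<Sum>j\<in>I. int (sh (w j))) = int N * gam T"
  proof -
    have "(\<Sum>j\<in>I. int (sg (u j)) - int (sh (w j))) = (\<Sum>j\<in>I. of_bool (Q \<le> a j) * gam T)"
    proof (rule sum.cong[OF refl])
      fix j assume "j \<in> I"
      then have j: "j < n - k" by simp
      show "int (sg (u j)) - int (sh (w j)) = of_bool (Q \<le> a j) * gam T"
        using pair_gam[OF j, of T] ab[OF j] unfolding sg_def sh_def by simp
    qed
    also have "\<dots> = (\<Sum>j\<in>I. of_bool (Q \<le> a j)) * gam T" by (simp add: sum_distrib_right)
    also have "(\<Sum>j\<in>I. of_bool (Q \<le> a j) :: int) = int N" unfolding N_def by (simp add: Int_def)
    finally show ?thesis by (simp add: sum_subtractf)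
  qed
  have rec1: "int (n - k) * gam T = int T * gam T - int (epsG T) + int (epsH T)"
    using rec[of T] g1 by simp
  define W where "W = int (n - k) - int T - int N"
  have Weq: "W * gam T = (int SH - int SG) + int dH - int dG"
  proof -
    have "int SG = (\<Sum>j\<in>I. int (sg (u j))) + int (\<Sum>x\<in>MG. sg x)" using SGsp by simp
    moreover have "int SH = (\<Sum>j\<in>I. int (sh (w j))) + int (\<Sum>x\<in>MH. sh x)" using SHsp by simp
    moreover have "int (epsG T) = int (\<Sum>x\<in>MG. sg x) + int dG" using epsG_sp by simp
    moreover have "int (epsH T) = int (\<Sum>x\<in>MH. sh x) + int dH" using epsH_sp by simp
    ultimately have "int (n - k) * gam T - int T * gam T - int N * gam T = (int SH - int SG) + int dH - int dG"
      using rec1 visd by linarith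
    then show ?thesis unfolding W_def by (simp add: algebra_simps)
  qed
  have NQ: "Q * N \<le> d * n"
  proof -
    have "N \<le> card {x\<in>VG. Q \<le> deg VG EG x}" unfolding N_def by (rule countI_G)
    then have "Q * N \<le> Q * cnt VG EG Q" unfolding cnt_def by (rule mult_le_mono2)
    also have "\<dots> \<le> DSG" by (rule cnt_bound[OF sgG])
    finally show ?thesis using sumG by linarith
  qed
  then have "d * (8 * N) \<le> d * n" unfolding Q_def by (simp add: algebra_simps)
  then have N8: "8 * N \<le> n" using d1 by simp
  have kd: "k \<le> k*d" "d \<le> k*d" "k*d \<le> k*d^2" "k*d^2 \<le> k*d^3" "10000*(k*d^3) \<le> n" "1 \<le> k*d"
    using kd_facts[OF k1] by auto
  have dd: "d * d \<le> k * d^2" using k1 by (simp add: power2_eq_square)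
  have dT: "d * T \<le> 10 * (k * d^2)"
  proof -
    have "d * T \<le> d * (10 * (k * d))" using T10 by (rule mult_le_mono2)
    also have "\<dots> = 10 * (k * d^2)" by (simp add: power2_eq_square algebra_simps)
    finally show ?thesis .
  qed
  have ab6: "(a j0 + b j0) * (Q + T + 2) \<le> (6 * d) * (Q + T + 2)"
    using j0 by (intro mult_le_mono1) simp
  have "(6 * d) * (Q + T + 2) = 48 * (d * d) + 6 * (d * T) + 12 * d" unfolding Q_def
    by (simp add: algebra_simps)
  then have bnd: "(a j0 + b j0) * (Q + T + 2) + k * Q \<le> 128 * (k * d^2)"
    using ab6 dd dT kd unfolding Q_def by linarith
  show "gam T = 0"
  proof (rule ccontr)
    assume "gam T \<noteq> 0"
    then have g: "1 \<le> \<bar>gam T\<bar>" by simp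
    have nk: "int (n - k) = int n - int k" using kle by simp
    have Wpos: "1 \<le> W" unfolding W_def using nk N8 T10 kd by linarith
    have W0: "0 \<le> W" using Wpos by simp
    have "\<bar>W * gam T\<bar> = \<bar>(int SH - int SG) + int dH - int dG\<bar>" using Weq by simp
    then have "W * \<bar>gam T\<bar> = \<bar>(int SH - int SG) + int dH - int dG\<bar>"
      using W0 by (simp only: abs_mult abs_of_nonneg)
    also have "\<dots> \<le> int ((a j0 + b j0) * (Q + T + 2)) + int (k * Q)"
      using ST dG_le dH_le by linarith
    also have "\<dots> \<le> int (128 * (k * d^2))" using bnd by linarith
    finally have h: "W * \<bar>gam T\<bar> \<le> int (128 * (k * d^2))" .
    have "W * 1 \<le> W * \<bar>gam T\<bar>" using g Wpos by (intro mult_left_mono) simp_all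
    then have "W \<le> int (128 * (k * d^2))" using h by simp
    then show False unfolding W_def using nk N8 T10 kd by linarith
  qed
qed

end

context setting begin

lemma card_bad_G:
  assumes XG: "XG = {z\<in>VG. deg VG EG z = T}"
  shows "card {x\<in>VG. \<exists>z\<in>XG. x \<notin> nb VG EG z} \<le> card XG * (n - T)"
proof -
  have sub: "{x\<in>VG. \<exists>z\<in>XG. x \<notin> nb VG EG z} \<subseteq> (\<Union>z\<in>XG. VG - nb VG EG z)" by blast
  have fX: "finite XG" using fG XG by simp
  have "card {x\<in>VG. \<exists>z\<in>XG. x \<notin> nb VG EG z} \<le> card (\<Union>z\<in>XG. VG - nb VG EG z)"
    using sub fG by (intro card_mono) auto
  also have "\<dots> \<le> (\<Sum>z\<in>XG. card (VG - nb VG EG z))" by (rule card_UN_le[OF fX])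
  also have "\<dots> = (\<Sum>z\<in>XG. n - T)"
  proof (rule sum.cong[OF refl])
    fix z assume "z \<in> XG"
    then have "deg VG EG z = T" using XG by simp
    moreover have "card (VG - nb VG EG z) = card VG - card (nb VG EG z)"
      using nb_sub[of VG EG z] nb_finite[OF sgG, of z] by (rule card_Diff_subset[rotated])
    ultimately show "card (VG - nb VG EG z) = n - T" using cG by (simp add: deg_nb)
  qed
  also have "\<dots> = card XG * (n - T)" by simp
  finally show ?thesis .
qed

lemma card_bad_H:
  assumes XH: "XH = {z\<in>VH. deg VH EH z = T}"
  shows "card {x\<in>VH. \<exists>z\<in>XH. x \<notin> nb VH EH z} \<le> card XH * (n - T)"
proof -
  have sub: "{x\<in>VH. \<exists>z\<in>XH. x \<notin> nb VH EH z} \<subseteq> (\<Union>z\<in>XH. VH - nb VH EH z)" by blast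
  have fX: "finite XH" using fH XH by simp
  have "card {x\<in>VH. \<exists>z\<in>XH. x \<notin> nb VH EH z} \<le> card (\<Union>z\<in>XH. VH - nb VH EH z)"
    using sub fH by (intro card_mono) auto
  also have "\<dots> \<le> (\<Sum>z\<in>XH. card (VH - nb VH EH z))" by (rule card_UN_le[OF fX])
  also have "\<dots> = (\<Sum>z\<in>XH. n - T)"
  proof (rule sum.cong[OF refl])
    fix z assume "z \<in> XH"
    then have "deg VH EH z = T" using XH by simp
    moreover have "card (VH - nb VH EH z) = card VH - card (nb VH EH z)"
      using nb_sub[of VH EH z] nb_finite[OF sgH, of z] by (rule card_Diff_subset[rotated])
    ultimately show "card (VH - nb VH EH z) = n - T" using cH by (simp add: deg_nb)
  qed
  also have "\<dots> = card XH * (n - T)" by simp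
  finally show ?thesis .
qed

lemma X_small:
  assumes "n < 2 * T" "X * T \<le> d * n"
  shows "X \<le> 2 * d"
proof (rule ccontr)
  assume "\<not> X \<le> 2 * d"
  then have "2 * d + 1 \<le> X" by simp
  then have "(2 * d + 1) * T \<le> X * T" by (rule mult_le_mono1)
  moreover have "d * (n + 1) \<le> d * (2 * T)" using assms(1) by (intro mult_le_mono2) simp
  ultimately have "d * (n + 1) + T \<le> d * n"
    using assms(2) by (simp add: algebra_simps)
  then show False using d1 by (simp add: algebra_simps)
qed

lemma caseC:
  assumes k1: "1 \<le> k" and A: "n - k - 2 * (k * d) - 1 \<le> T"
  shows "gam (Suc T) = 0"
proof -
  have kd: "k \<le> k*d" "d \<le> k*d" "k*d \<le> k*d^2" "k*d^2 \<le> k*d^3" "10000*(k*d^3) \<le> n" "1 \<le> k*d"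
    using kd_facts[OF k1] by auto
  have T2: "n < 2 * T" using A kd by linarith
  have nT: "n - T \<le> k + 2 * (k * d) + 1" using A by linarith
  define XG where "XG = {z\<in>VG. deg VG EG z = T}"
  define XH where "XH = {z\<in>VH. deg VH EH z = T}"
  define bG where "bG = {x\<in>VG. \<exists>z\<in>XG. x \<notin> nb VG EG z}"
  define bH where "bH = {x\<in>VH. \<exists>z\<in>XH. x \<notin> nb VH EH z}"
  have xg: "card XG \<le> 2 * d"
    using X_small[OF T2] TnG[of T] unfolding XG_def nG_def by (simp add: mult.commute)
  have xh: "card XH \<le> 2 * d"
    using X_small[OF T2] TnH[of T] unfolding XH_def nH_def by (simp add: mult.commute)
  have e: "(2 * d) * (k + 2 * (k * d) + 1) = 2 * (k * d) + 4 * (k * d^2) + 2 * d"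
    by (simp add: algebra_simps power2_eq_square)
  have "card bG \<le> card XG * (n - T)" unfolding bG_def by (rule card_bad_G[OF XG_def])
  also have "\<dots> \<le> (2 * d) * (k + 2 * (k * d) + 1)" using xg nT by (rule mult_le_mono)
  finally have cbG: "card bG \<le> 8 * (k * d^2)" using e kd by linarith
  have "card bH \<le> card XH * (n - T)" unfolding bH_def by (rule card_bad_H[OF XH_def])
  also have "\<dots> \<le> (2 * d) * (k + 2 * (k * d) + 1)" using xh nT by (rule mult_le_mono)
  finally have cbH: "card bH \<le> 8 * (k * d^2)" using e kd by linarith
  have c1: "card {j\<in>I. u j \<in> bG} \<le> card bG"
  proof -
    have "card {j\<in>I. u j \<in> bG} \<le> card {x\<in>VG. x \<in> bG}" by (rule countI_G)
    also have "{x\<in>VG. x \<in> bG} = bG" unfolding bG_def by blast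
    finally show ?thesis .
  qed
  have c2: "card {j\<in>I. w j \<in> bH} \<le> card bH"
  proof -
    have "card {j\<in>I. w j \<in> bH} \<le> card {x\<in>VH. x \<in> bH}" by (rule countI_H)
    also have "{x\<in>VH. x \<in> bH} = bH" unfolding bH_def by blast
    finally show ?thesis .
  qed
  have eqs: "{j\<in>I. u j \<in> bG \<or> w j \<in> bH} = {j\<in>I. u j \<in> bG} \<union> {j\<in>I. w j \<in> bH}" by auto
  have "card ({j\<in>I. u j \<in> bG} \<union> {j\<in>I. w j \<in> bH}) \<le> card {j\<in>I. u j \<in> bG} + card {j\<in>I. w j \<in> bH}"
    by (rule card_Un_le)
  then have "card {j\<in>I. u j \<in> bG \<or> w j \<in> bH} \<le> card {j\<in>I. u j \<in> bG} + card {j\<in>I. w j \<in> bH}"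
    by (simp only: eqs)
  also have "\<dots> < n - k" using c1 c2 cbG cbH kd by linarith
  also have "\<dots> = card I" by simp
  finally have lt: "card {j\<in>I. u j \<in> bG \<or> w j \<in> bH} < card I" .
  have "{j\<in>I. u j \<in> bG \<or> w j \<in> bH} \<noteq> I"
  proof
    assume "{j\<in>I. u j \<in> bG \<or> w j \<in> bH} = I"
    then show False using lt by simp
  qed
  then obtain j where jI: "j \<in> I" and gu: "u j \<notin> bG" and gw: "w j \<notin> bH" by blast
  then have j: "j < n - k" by simp
  have PGe: "PG T (u j) = nG T"
  proof -
    have "{z\<in>nb VG EG (u j). deg VG EG z = T} = XG"
    proof
      show "{z\<in>nb VG EG (u j). deg VG EG z = T} \<subseteq> XG"
        unfolding XG_def using nb_sub[of VG EG "u j"] by blast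
      show "XG \<subseteq> {z\<in>nb VG EG (u j). deg VG EG z = T}"
      proof
        fix z assume z: "z \<in> XG"
        then have zV: "z \<in> VG" and dz: "deg VG EG z = T" unfolding XG_def by auto
        have "u j \<in> nb VG EG z" using gu z uV[OF j] unfolding bG_def by blast
        then have "z \<in> nb VG EG (u j)" using nb_sym[OF zV uV[OF j]] by blast
        then show "z \<in> {z\<in>nb VG EG (u j). deg VG EG z = T}" using dz by blast
      qed
    qed
    then show ?thesis unfolding PG_def nG_def XG_def by simp
  qed
  have PHe: "PH T (w j) = nH T"
  proof -
    have "{z\<in>nb VH EH (w j). deg VH EH z = T} = XH"
    proof
      show "{z\<in>nb VH EH (w j). deg VH EH z = T} \<subseteq> XH"
        unfolding XH_def using nb_sub[of VH EH "w j"] by blast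
      show "XH \<subseteq> {z\<in>nb VH EH (w j). deg VH EH z = T}"
      proof
        fix z assume z: "z \<in> XH"
        then have zV: "z \<in> VH" and dz: "deg VH EH z = T" unfolding XH_def by auto
        have "w j \<in> nb VH EH z" using gw z wV[OF j] unfolding bH_def by blast
        then have "z \<in> nb VH EH (w j)" using nb_sym[OF zV wV[OF j]] by blast
        then show "z \<in> {z\<in>nb VH EH (w j). deg VH EH z = T}" using dz by blast
      qed
    qed
    then show ?thesis unfolding PH_def nH_def XH_def by simp
  qed
  have "gam T = int (nG T) - int (nH T)" using pair_gam[OF j, of T] PGe PHe by simp
  then show ?thesis using nG_cnt[of T] nH_cnt[of T] unfolding gam_def by simp
qed

end

context setting begin

lemma gam0: "gam 0 = 0"
  unfolding gam_def cnt_def using cG cH by simp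

lemma condA:
  assumes k1: "1 \<le> k" and T1: "10 * (k * d) < T" and T2: "T + 2 * (k * d) + 1 \<le> n - k"
  shows "int (k * d * n) < int T * (int n - int k - int T)"
proof -
  have kd: "k \<le> k*d" "d \<le> k*d" "k*d \<le> k*d^2" "k*d^2 \<le> k*d^3" "10000*(k*d^3) \<le> n" "1 \<le> k*d"
    using kd_facts[OF k1] by auto
  define K where "K = int (k * d)"
  define M where "M = int n - int k - int T"
  have KN: "int (k * d * n) = K * int n" unfolding K_def by simp
  have K0: "0 \<le> K" unfolding K_def by simp
  have Tg: "10 * K + 1 \<le> int T" unfolding K_def using T1 by linarith
  have Mg: "2 * K + 1 \<le> M" unfolding K_def M_def using T2 kle by linarith
  have Nbig: "10000 * K \<le> int n" unfolding K_def using kd by linarith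
  have kK: "int k \<le> K" unfolding K_def using kd by linarith
  show ?thesis
  proof (cases "2 * T \<le> n")
    case True
    have "2 * int T \<le> int n" using True by simp
    then have "int n \<le> 10 * int n - 10 * int k - 10 * int T" using Nbig kK K0 by linarith
    then have M10: "int n \<le> 10 * M" unfolding M_def by (simp add: algebra_simps)
    have "(10 * K + 1) * M \<le> int T * M" using Tg Mg K0 by (intro mult_right_mono) simp_all
    moreover have "K * int n \<le> K * (10 * M)" using M10 K0 by (rule mult_left_mono)
    moreover have "(10 * K + 1) * M = K * (10 * M) + M" by (simp add: algebra_simps)
    ultimately have "K * int n + M \<le> int T * M" by linarith
    then have "K * int n < int T * M" using Mg K0 by linarith
    then show ?thesis unfolding KN M_def .
  next
    case False
    then have N2: "int n \<le> 2 * int T" by simp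
    have "int T * (2 * K + 1) \<le> int T * M" using Mg by (intro mult_left_mono) simp_all
    moreover have "K * int n \<le> K * (2 * int T)" using N2 K0 by (rule mult_left_mono)
    moreover have "int T * (2 * K + 1) = K * (2 * int T) + int T" by (simp add: algebra_simps)
    ultimately have "K * int n + int T \<le> int T * M" by linarith
    then have "K * int n < int T * M" using Tg K0 by linarith
    then show ?thesis unfolding KN M_def .
  qed
qed

lemma step:
  assumes Tn: "T < n" and g1: "gam (Suc T) = 0"
  shows "gam T = 0"
proof (cases "T = 0")
  case True then show ?thesis using gam0 by simp
next
  case Tnz: False
  show ?thesis
  proof (cases "k = 0")
    case True
    have "0 < int T * (int n - int T)" using Tnz Tn by simp
    then have "int (k * d * n) < int T * (int n - int k - int T)" using True by simp
    then show ?thesis by (rule caseA[OF g1])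
  next
    case False
    then have k1: "1 \<le> k" by simp
    have kd: "k \<le> k*d" "d \<le> k*d" "k*d \<le> k*d^2" "k*d^2 \<le> k*d^3" "10000*(k*d^3) \<le> n" "1 \<le> k*d"
      using kd_facts[OF k1] by auto
    consider (B) "T \<le> 10 * (k * d)" | (C) "n - k - 2 * (k * d) - 1 \<le> T - 1"
      | (A) "10 * (k * d) < T" "T + 2 * (k * d) + 1 \<le> n - k"
      using kd Tnz by linarith
    then show ?thesis
    proof cases
      case B then show ?thesis using caseB[OF k1 _ g1] by simp
    next
      case C
      have "gam (Suc (T - 1)) = 0" by (rule caseC[OF k1 C])
      then show ?thesis using Tnz by simp
    next
      case A
      show ?thesis by (rule caseA[OF g1 condA[OF k1 A]])
    qed
  qed
qed

lemma gam_all: "gam T = 0"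
proof (cases "n \<le> T")
  case True
  have "cnt VG EG T = 0" using cG True by (intro cnt_ge_n[OF sgG]) simp
  moreover have "cnt VH EH T = 0" using cH True by (intro cnt_ge_n[OF sgH]) simp
  ultimately show ?thesis unfolding gam_def by simp
next
  case False
  have all: "gam (n - m) = 0" for m
  proof (induction m)
    case 0
    have "cnt VG EG n = 0" using cG by (intro cnt_ge_n[OF sgG]) simp
    moreover have "cnt VH EH n = 0" using cH by (intro cnt_ge_n[OF sgH]) simp
    ultimately show ?case unfolding gam_def by simp
  next
    case (Suc m)
    show ?case
    proof (cases "m < n")
      case True
      then have e: "Suc (n - Suc m) = n - m" by simp
      have "gam (Suc (n - Suc m)) = 0" unfolding e by (rule Suc.IH)
      moreover have "n - Suc m < n" using True by simp
      ultimately show ?thesis using step by blast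
    next
      case False
      then have e: "n - Suc m = n - m" by simp
      show ?thesis unfolding e by (rule Suc.IH)
    qed
  qed
  have "n - (n - T) = T" using False by simp
  then show ?thesis using all[of "n - T"] by simp
qed

lemma main: "degree_seq VG EG = degree_seq VH EH"
  using degseq_from_cnt[OF fG fH] gam_all unfolding gam_def by simp

end


theorem theorem1p1:
  fixes VG :: "'a set" and EG :: "'a set set"
    and VH :: "'b set" and EH :: "'b set set"
    and d n k :: nat and u :: "nat \<Rightarrow> 'a" and w :: "nat \<Rightarrow> 'b"
  assumes "simple_graph VG EG" and "simple_graph VH EH"
    and "card VG = n" and "card VH = n" and "n \<ge> 3"
    and "real k * (10^4 * real d ^ 3) \<le> real n"
    and "real (\<Sum>v\<in>VG. deg VG EG v) / real n \<le> real d"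
    and "real (\<Sum>v\<in>VH. deg VH EH v) / real n \<le> real d"
    and "inj_on u {..<n - k}" and "u ` {..<n - k} \<subseteq> VG"
    and "inj_on w {..<n - k}" and "w ` {..<n - k} \<subseteq> VH"
    and "\<forall>i<n - k. graph_iso (del_vert_V VG (u i)) (del_vert_E EG (u i))
                            (del_vert_V VH (w i)) (del_vert_E EH (w i))"
  shows "degree_seq VG EG = degree_seq VH EH"
proof -
  have npos: "0 < real n" using assms(5) by simp
  have sG: "(\<Sum>v\<in>VG. deg VG EG v) \<le> d * n"
  proof -
    have "real (\<Sum>v\<in>VG. deg VG EG v) \<le> real d * real n"
      using assms(7) npos by (simp add: pos_divide_le_eq)
    then have "real (\<Sum>v\<in>VG. deg VG EG v) \<le> real (d * n)" by simp
    then show ?thesis by (simp only: of_nat_le_iff)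
  qed
  have sH: "(\<Sum>v\<in>VH. deg VH EH v) \<le> d * n"
  proof -
    have "real (\<Sum>v\<in>VH. deg VH EH v) \<le> real d * real n"
      using assms(8) npos by (simp add: pos_divide_le_eq)
    then have "real (\<Sum>v\<in>VH. deg VH EH v) \<le> real (d * n)" by simp
    then show ?thesis by (simp only: of_nat_le_iff)
  qed
  have fG: "finite VG" using assms(1) sg_finite by blast
  have fH: "finite VH" using assms(2) sg_finite by blast
  show ?thesis
  proof (cases "d = 0")
    case True
    have zG: "\<And>x. x \<in> VG \<Longrightarrow> deg VG EG x = 0" using sG True fG by simp
    have zH: "\<And>x. x \<in> VH \<Longrightarrow> deg VH EH x = 0" using sH True fH by simp
    have cntG: "cnt VG EG T = (if T = 0 then n else 0)" for T
    proof (cases "T = 0")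
      case True then show ?thesis using assms(3) unfolding cnt_def by simp
    next
      case False
      then have e: "{x\<in>VG. T \<le> deg VG EG x} = {}" using zG by auto
      have "card {x\<in>VG. T \<le> deg VG EG x} = 0" by (simp only: e card.empty)
      then show ?thesis using False unfolding cnt_def by simp
    qed
    have cntH: "cnt VH EH T = (if T = 0 then n else 0)" for T
    proof (cases "T = 0")
      case True then show ?thesis using assms(4) unfolding cnt_def by simp
    next
      case False
      then have e: "{x\<in>VH. T \<le> deg VH EH x} = {}" using zH by auto
      have "card {x\<in>VH. T \<le> deg VH EH x} = 0" by (simp only: e card.empty)
      then show ?thesis using False unfolding cnt_def by simp
    qed
    show ?thesis using degseq_from_cnt[OF fG fH] cntG cntH by simp
  next
    case False
    then have d1: "1 \<le> d" by simp
    have kb: "k * (10000 * d^3) \<le> n"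
    proof -
      have "real (k * (10000 * d^3)) = real k * (10^4 * real d ^ 3)" by simp
      then have "real (k * (10000 * d^3)) \<le> real n" using assms(6) by simp
      then show ?thesis by (simp only: of_nat_le_iff)
    qed
    have "setting VG EG VH EH n k d u w"
      by (rule setting.intro[OF assms(1,2,3,4,5) kb d1 sG sH assms(9,10,11,12,13)])
    then show ?thesis by (rule setting.main)
  qed
qed

end
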